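(* Fix angles $\alpha_1,\alpha_2,\alpha_3\in(0,\pi/2)$ with $\alpha_1+\alpha_2+\alpha_3=\pi$. Let $H$ and $H'$ be two right-angled hexagons in the hyperbolic plane, each with a choice of long and short edges, whose tripods have the same angles $2\alpha_1,2\alpha_2,2\alpha_3$ at the center and common edge lengths $d$ and $d'$ respectively. Let $2\ell_i$ and $2\ell_i'$ denote the lengths of the long edge $s_i$ of $H$ and of $H'$ respectively. Then for all $i,j\in\{1,2,3\}$, \[ \frac{\cosh\ell_i'}{\cosh\ell_j'}=\frac{\cosh\ell_i}{\cosh\ell_j}. \] That is, with the angles $\alpha_i$ fixed, the ratios among $\cosh\ell_1,\cosh\ell_2,\cosh\ell_3$ do not depend on $d$.
   Context: A right-angled hexagon $H$ comes with a choice of three pairwise non-consecutive edges $s_1,s_2,s_3$ (long edges); the other three edges $t_1,t_2,t_3$ are the short edges, $t_i$ opposite to $s_i$. Let $\tilde l_i$ be the complete geodesic containing $t_i$, $O$ the unique point equidistant from $\tilde l_1,\tilde l_2,\tilde l_3$, and $A_i$ the foot of the perpendicular from $O$ to $\tilde l_i$. The tripod of $H$ is $OA_1\cup OA_2\cup OA_3$; its three edges have a common length $d$. For $\{i,j,m\}=\{1,2,3\}$ the angle at $O$ between $OA_j$ and $OA_m$ (on the side of $s_i$) is denoted $2\alpha_i$. Here one considers hexagons with $O$ in the interior of $H$, so that $\alpha_i<\pi/2$ and $\alpha_1+\alpha_2+\alpha_3=\pi$. *)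

theory Defs
  imports "HOL-Analysis.Analysis"
begin

text \<open>Hyperboloid model of the hyperbolic plane in real^3 with the Minkowski form
  B(x,y) = x1 y1 + x2 y2 - x3 y3; points: B(x,x) = -1, x3 > 0.\<close>

definition mink :: "real^3 \<Rightarrow> real^3 \<Rightarrow> real" where
  "mink x y = x$1 * y$1 + x$2 * y$2 - x$3 * y$3"

definition hyp_pt :: "real^3 \<Rightarrow> bool" where
  "hyp_pt x \<longleftrightarrow> mink x x = -1 \<and> x$3 > 0"

definition hdist :: "real^3 \<Rightarrow> real^3 \<Rightarrow> real" where
  "hdist x y = arcosh (- mink x y)"

text \<open>Complete geodesic through two distinct points p, q.\<close>
definition hline :: "real^3 \<Rightarrow> real^3 \<Rightarrow> (real^3) set" where
  "hline p q = {x. hyp_pt x \<and> x \<in> span {p, q}}"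

definition hdist_set :: "real^3 \<Rightarrow> (real^3) set \<Rightarrow> real" where
  "hdist_set x S = Inf (hdist x ` S)"

text \<open>Unsigned angle at vertex v between the geodesics from v to p and from v to q,
  computed from the tangent vectors at v (Minkowski-orthogonal projections).\<close>
definition hangle :: "real^3 \<Rightarrow> real^3 \<Rightarrow> real^3 \<Rightarrow> real" where
  "hangle p v q =
     (let u = p + mink p v *\<^sub>R v; w = q + mink q v *\<^sub>R v
      in arccos (mink u w / sqrt (mink u u * mink w w)))"

text \<open>Euclidean determinant of three vectors; its sign tells on which side of the
  geodesic hline p q (the plane span {p,q}) the point x lies.\<close>
definition det3 :: "real^3 \<Rightarrow> real^3 \<Rightarrow> real^3 \<Rightarrow> real" where
  "det3 a b c = a$1 * (b$2 * c$3 - b$3 * c$2) - a$2 * (b$1 * c$3 - b$3 * c$1)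
               + a$3 * (b$1 * c$2 - b$2 * c$1)"

text \<open>Vertices of a hexagon, indexed cyclically mod 6. Edge k joins vertex k and k+1.\<close>
definition vx :: "(nat \<Rightarrow> real^3) \<Rightarrow> nat \<Rightarrow> real^3" where
  "vx v k = v (k mod 6)"

definition right_angled_hexagon :: "(nat \<Rightarrow> real^3) \<Rightarrow> bool" where
  "right_angled_hexagon v \<longleftrightarrow>
     (\<forall>k<6. hyp_pt (v k)) \<and>
     (\<forall>k<6. \<forall>j<6. \<forall>j'<6. j \<noteq> k \<and> j \<noteq> (k+1) mod 6 \<and> j' \<noteq> k \<and> j' \<noteq> (k+1) mod 6 \<longrightarrow>
        det3 (vx v k) (vx v (k+1)) (vx v j) * det3 (vx v k) (vx v (k+1)) (vx v j') > 0) \<and>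
     (\<forall>k<6. hangle (vx v (k+5)) (vx v k) (vx v (k+1)) = pi / 2)"

definition hex_interior :: "(nat \<Rightarrow> real^3) \<Rightarrow> real^3 \<Rightarrow> bool" where
  "hex_interior v x \<longleftrightarrow> hyp_pt x \<and>
     (\<forall>k<6. \<forall>j<6. j \<noteq> k \<and> j \<noteq> (k+1) mod 6 \<longrightarrow>
        det3 (vx v k) (vx v (k+1)) (vx v j) * det3 (vx v k) (vx v (k+1)) x > 0)"

text \<open>Labelling convention: long edges s_1, s_2, s_3 are edges 0, 2, 4
  (s_i = edge 2(i-1)); short edge t_i is the opposite edge 2(i-1)+3 (mod 6),
  i.e. t_1 = edge 3, t_2 = edge 5, t_3 = edge 1.\<close>

definition long_len :: "(nat \<Rightarrow> real^3) \<Rightarrow> nat \<Rightarrow> real" where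
  "long_len v i = hdist (vx v (2*(i-1))) (vx v (2*(i-1)+1))"

definition short_line :: "(nat \<Rightarrow> real^3) \<Rightarrow> nat \<Rightarrow> (real^3) set" where
  "short_line v i = hline (vx v (2*(i-1)+3)) (vx v (2*(i-1)+4))"

definition perp_foot :: "real^3 \<Rightarrow> (real^3) set \<Rightarrow> real^3 \<Rightarrow> bool" where
  "perp_foot C L A \<longleftrightarrow> A \<in> L \<and> (\<forall>X\<in>L. X \<noteq> A \<longrightarrow> hangle C A X = pi / 2)"

definition hex_tripod ::
  "(nat \<Rightarrow> real^3) \<Rightarrow> real^3 \<Rightarrow> (nat \<Rightarrow> real^3) \<Rightarrow> real \<Rightarrow> (nat \<Rightarrow> real) \<Rightarrow> bool" where
  "hex_tripod v C A d \<alpha> \<longleftrightarrow>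
     right_angled_hexagon v \<and> hex_interior v C \<and>
     hdist_set C (short_line v 1) = hdist_set C (short_line v 2) \<and>
     hdist_set C (short_line v 2) = hdist_set C (short_line v 3) \<and>
     (\<forall>i\<in>{1,2,3}. perp_foot C (short_line v i) (A i) \<and> hdist C (A i) = d) \<and>
     (\<forall>i j m. {i, j, m} = {1, 2, 3::nat} \<longrightarrow> hangle (A j) C (A m) = 2 * \<alpha> i)"

end

theory Submission
  imports Defs
begin

lemma mink_comm: "mink x y = mink y x"
  unfolding mink_def by (simp add: algebra_simps)

lemma mink_add1[simp]: "mink (x + y) z = mink x z + mink y z"
  unfolding mink_def by (simp add: algebra_simps)
lemma mink_add2[simp]: "mink z (x + y) = mink z x + mink z y"
  unfolding mink_def by (simp add: algebra_simps)
lemma mink_diff1[simp]: "mink (x - y) z = mink x z - mink y z"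
  unfolding mink_def by (simp add: algebra_simps)
lemma mink_diff2[simp]: "mink z (x - y) = mink z x - mink z y"
  unfolding mink_def by (simp add: algebra_simps)
lemma mink_scale1[simp]: "mink (a *\<^sub>R x) z = a * mink x z"
  unfolding mink_def by (simp add: algebra_simps)
lemma mink_scale2[simp]: "mink z (a *\<^sub>R x) = a * mink z x"
  unfolding mink_def by (simp add: algebra_simps)

lemma tang_aux: fixes x1 x2 x3 v1 v2 v3 :: real
  assumes "v1 * v1 + v2 * v2 - v3 * v3 = -1" "x1 * v1 + x2 * v2 - x3 * v3 = 0"
  shows "v3 * v3 * (x1 * x1 + x2 * x2 - x3 * x3) - (x1 * x1 + x2 * x2) = (x1 * v2 - x2 * v1)^2"
  using assms by algebra

lemma tangent_nonneg:
  assumes "hyp_pt v" "mink x v = 0"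
  shows "mink x x \<ge> 0" and "mink x x = 0 \<Longrightarrow> x = 0"
proof -
  have h: "v$1 * v$1 + v$2 * v$2 - v$3 * v$3 = -1" "v$3 > 0"
    using assms(1) unfolding hyp_pt_def mink_def by auto
  have o: "x$1 * v$1 + x$2 * v$2 - x$3 * v$3 = 0" using assms(2) unfolding mink_def by simp
  have e: "v$3 * v$3 * mink x x = (x$1 * x$1 + x$2 * x$2) + (x$1 * v$2 - x$2 * v$1)^2"
    using tang_aux[OF h(1) o] unfolding mink_def by (simp add: algebra_simps)
  have "v$3 * v$3 * mink x x \<ge> 0" unfolding e by simp
  moreover have "v$3 * v$3 > 0" using h by simp
  ultimately show "mink x x \<ge> 0" by (simp add: zero_le_mult_iff)
  assume z: "mink x x = 0"
  then have "x$1 * x$1 + x$2 * x$2 + (x$1 * v$2 - x$2 * v$1)^2 = 0" using e by simp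
  then have "x$1 * x$1 + x$2 * x$2 = 0"
    by (smt (verit) zero_le_power2 zero_le_square)
  then have x12: "x$1 = 0" "x$2 = 0"
    by (simp_all add: sum_squares_eq_zero_iff)
  then have "x$3 = 0" using o h(2) by simp
  then show "x = 0" using x12 by (simp add: vec_eq_iff forall_3)
qed

lemma tangent_CS:
  assumes "hyp_pt v" "mink u v = 0" "mink w v = 0"
  shows "(mink u w)^2 \<le> mink u u * mink w w"
proof (cases "mink w w = 0")
  case True
  then have "w = 0" using tangent_nonneg[OF assms(1,3)] by blast
  then show ?thesis by (simp add: mink_def)
next
  case False
  have wpos: "mink w w > 0" using tangent_nonneg(1)[OF assms(1,3)] False by simp
  define t where "t = mink u w / mink w w"
  have "mink (u - t *\<^sub>R w) v = 0" using assms by simp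
  then have "mink (u - t *\<^sub>R w) (u - t *\<^sub>R w) \<ge> 0" using tangent_nonneg(1)[OF assms(1)] by blast
  then have "mink u u - 2 * t * mink u w + t * t * mink w w \<ge> 0"
    by (simp add: mink_comm[of w u] algebra_simps)
  then have "mink u u - (mink u w)^2 / mink w w \<ge> 0"
    using wpos unfolding t_def by (simp add: power2_eq_square field_simps)
  then show ?thesis using wpos by (simp add: field_simps)
qed

lemma rev_CS:
  assumes "hyp_pt x" "hyp_pt y"
  shows "mink x y \<le> -1"
proof -
  have hx: "x$3 * x$3 = 1 + x$1 * x$1 + x$2 * x$2" "x$3 > 0"
    using assms(1) unfolding hyp_pt_def mink_def by auto
  have hy: "y$3 * y$3 = 1 + y$1 * y$1 + y$2 * y$2" "y$3 > 0"
    using assms(2) unfolding hyp_pt_def mink_def by auto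
  have "(x$3 * y$3)^2 - (1 + x$1 * y$1 + x$2 * y$2)^2
        = (x$1 - y$1)^2 + (x$2 - y$2)^2 + (x$1 * y$2 - x$2 * y$1)^2"
    using hx(1) hy(1) by algebra
  then have "(1 + x$1 * y$1 + x$2 * y$2)^2 \<le> (x$3 * y$3)^2" by (smt (verit) zero_le_power2)
  then have "\<bar>1 + x$1 * y$1 + x$2 * y$2\<bar> \<le> \<bar>x$3 * y$3\<bar>" by (simp add: abs_le_square_iff)
  moreover have "x$3 * y$3 > 0" using hx hy by simp
  ultimately show ?thesis unfolding mink_def by linarith
qed

lemma cosh_hdist:
  assumes "hyp_pt x" "hyp_pt y"
  shows "cosh (hdist x y) = - mink x y" "hdist x y \<ge> 0"
  using rev_CS[OF assms] unfolding hdist_def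
  by (auto intro: cosh_arcosh_real arcosh_nonneg_real)

lemma tang_proj: "hyp_pt v \<Longrightarrow> mink (p + mink p v *\<^sub>R v) v = 0"
  unfolding hyp_pt_def by simp

lemma cos_hangle:
  fixes p q v :: "real^3"
  assumes "hyp_pt v"
  defines "u \<equiv> p + mink p v *\<^sub>R v" and "w \<equiv> q + mink q v *\<^sub>R v"
  shows "cos (hangle p v q) = mink u w / sqrt (mink u u * mink w w)"
proof -
  have tu: "mink u v = 0" and tw: "mink w v = 0"
    using tang_proj[OF assms(1)] unfolding u_def w_def by auto
  have cs: "(mink u w)^2 \<le> mink u u * mink w w" by (rule tangent_CS[OF assms(1) tu tw])
  have nn: "mink u u * mink w w \<ge> 0"
    using tangent_nonneg(1)[OF assms(1) tu] tangent_nonneg(1)[OF assms(1) tw] by simp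
  have ab: "\<bar>mink u w\<bar> \<le> sqrt (mink u u * mink w w)"
    using cs nn by (intro real_le_rsqrt) simp
  moreover have "sqrt (mink u u * mink w w) \<ge> 0" using nn by simp
  ultimately have A: "\<bar>mink u w / sqrt (mink u u * mink w w)\<bar> \<le> 1"
  proof (cases "mink u u * mink w w = 0")
    case False
    then have "mink u u * mink w w > 0" using nn by linarith
    then have S: "sqrt (mink u u * mink w w) > 0" by simp
    have "\<bar>mink u w / sqrt (mink u u * mink w w)\<bar> = \<bar>mink u w\<bar> / sqrt (mink u u * mink w w)"
      using S by (simp only: abs_divide abs_of_pos)
    also have "\<dots> \<le> 1" using ab S by (simp only: divide_le_eq_1_pos)
    finally show ?thesis .
  qed simp
  have B: "hangle p v q = arccos (mink u w / sqrt (mink u u * mink w w))"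
    unfolding hangle_def u_def w_def Let_def by (rule refl)
  show ?thesis unfolding B by (rule cos_arccos_abs[OF A])
qed

lemma right_angle:
  assumes "hyp_pt v" "hangle p v q = pi / 2"
  shows "mink (p + mink p v *\<^sub>R v) (q + mink q v *\<^sub>R v) = 0"
proof -
  define u where "u = p + mink p v *\<^sub>R v"
  define w where "w = q + mink q v *\<^sub>R v"
  have tu: "mink u v = 0" and tw: "mink w v = 0"
    using tang_proj[OF assms(1)] unfolding u_def w_def by auto
  have cs: "(mink u w)^2 \<le> mink u u * mink w w" by (rule tangent_CS[OF assms(1) tu tw])
  have "mink u w / sqrt (mink u u * mink w w) = 0"
    using cos_hangle[OF assms(1), of p q] assms(2) unfolding u_def w_def by simp
  then consider "mink u w = 0" | "mink u u * mink w w = 0" by auto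
  then have "mink u w = 0" using cs by cases auto
  then show ?thesis unfolding u_def w_def .
qed

lemma det3_cross: "det3 a b w = (a$2 * b$3 - a$3 * b$2) * w$1 + (a$3 * b$1 - a$1 * b$3) * w$2
   + (a$1 * b$2 - a$2 * b$1) * w$3"
  unfolding det3_def by (simp add: algebra_simps)

lemma par_aux:
  fixes x1 x2 x3 a1 a2 a3 b1 b2 b3 :: real
  assumes "x1 * a1 + x2 * a2 - x3 * a3 = 0" "x1 * b1 + x2 * b2 - x3 * b3 = 0"
  defines "c1 \<equiv> a3 * b2 - a2 * b3" and "c2 \<equiv> a1 * b3 - a3 * b1" and "c3 \<equiv> a1 * b2 - a2 * b1"
  shows "(c1*c1+c2*c2+c3*c3) * x1 = (x1*c1+x2*c2+x3*c3) * c1"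
    "(c1*c1+c2*c2+c3*c3) * x2 = (x1*c1+x2*c2+x3*c3) * c2"
    "(c1*c1+c2*c2+c3*c3) * x3 = (x1*c1+x2*c2+x3*c3) * c3"
proof -
  define e1 where "e1 = x1 * a1 + x2 * a2 - x3 * a3"
  define e2 where "e2 = x1 * b1 + x2 * b2 - x3 * b3"
  have i1: "(c1*c1+c2*c2+c3*c3) * x1 - (x1*c1+x2*c2+x3*c3) * c1
      = e2 * (- c2 * a3 - c3 * a2) - e1 * (- c2 * b3 - c3 * b2)"
    unfolding e1_def e2_def c1_def c2_def c3_def by (simp add: algebra_simps)
  have i2: "(c1*c1+c2*c2+c3*c3) * x2 - (x1*c1+x2*c2+x3*c3) * c2
      = e2 * (c3 * a1 + c1 * a3) - e1 * (c3 * b1 + c1 * b3)"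
    unfolding e1_def e2_def c1_def c2_def c3_def by (simp add: algebra_simps)
  have i3: "(c1*c1+c2*c2+c3*c3) * x3 - (x1*c1+x2*c2+x3*c3) * c3
      = e2 * (c1 * a2 - c2 * a1) - e1 * (c1 * b2 - c2 * b1)"
    unfolding e1_def e2_def c1_def c2_def c3_def by (simp add: algebra_simps)
  have "e1 = 0" "e2 = 0" using assms(1,2) unfolding e1_def e2_def by auto
  then show "(c1*c1+c2*c2+c3*c3) * x1 = (x1*c1+x2*c2+x3*c3) * c1"
    "(c1*c1+c2*c2+c3*c3) * x2 = (x1*c1+x2*c2+x3*c3) * c2"
    "(c1*c1+c2*c2+c3*c3) * x3 = (x1*c1+x2*c2+x3*c3) * c3"
    using i1 i2 i3 by simp_all
qed

lemma par:
  assumes "mink x a = 0" "mink x b = 0" "mink y a = 0" "mink y b = 0"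
    "det3 a b w \<noteq> 0" "mink y y \<noteq> 0"
  shows "x = (mink x y / mink y y) *\<^sub>R y"
proof -
  define c :: "real^3" where "c = vector [a$3 * b$2 - a$2 * b$3, a$1 * b$3 - a$3 * b$1, a$1 * b$2 - a$2 * b$1]"
  have c: "c$1 = a$3 * b$2 - a$2 * b$3" "c$2 = a$1 * b$3 - a$3 * b$1" "c$3 = a$1 * b$2 - a$2 * b$1"
    unfolding c_def by simp_all
  define N where "N = c$1*c$1+c$2*c$2+c$3*c$3"
  have "N \<noteq> 0"
  proof
    assume "N = 0"
    moreover have "c$1*c$1 \<ge> 0" "c$2*c$2 \<ge> 0" "c$3*c$3 \<ge> 0" by simp_all
    ultimately have "c$1*c$1 = 0" "c$2*c$2 = 0" "c$3*c$3 = 0" unfolding N_def by linarith+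
    then have "c$1 = 0 \<and> c$2 = 0 \<and> c$3 = 0" by simp
    then have "a$3 * b$2 = a$2 * b$3" "a$1 * b$3 = a$3 * b$1" "a$1 * b$2 = a$2 * b$1"
      unfolding c by simp_all
    then show False using assms(5) unfolding det3_cross by (simp add: algebra_simps)
  qed
  have gen: "z = ((z$1*c$1+z$2*c$2+z$3*c$3)/N) *\<^sub>R c" if "mink z a = 0" "mink z b = 0" for z
  proof -
    have e: "z$1 * a$1 + z$2 * a$2 - z$3 * a$3 = 0" "z$1 * b$1 + z$2 * b$2 - z$3 * b$3 = 0"
      using that unfolding mink_def by simp_all
    note p = par_aux[OF e, folded c N_def]
    define t where "t = (z$1*c$1+z$2*c$2+z$3*c$3) / N"
    have "z$k = t * c$k" if "N * z$k = (z$1*c$1+z$2*c$2+z$3*c$3) * c$k" for k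
      using that \<open>N \<noteq> 0\<close> unfolding t_def by (simp add: field_simps)
    then have "z$1 = t * c$1" "z$2 = t * c$2" "z$3 = t * c$3" using p unfolding N_def by blast+
    then show ?thesis unfolding t_def[symmetric] by (simp add: vec_eq_iff forall_3)
  qed
  obtain tx where tx: "x = tx *\<^sub>R c" using gen[OF assms(1,2)] by blast
  obtain ty where ty: "y = ty *\<^sub>R c" using gen[OF assms(3,4)] by blast
  have "ty \<noteq> 0" using assms(6) ty by auto
  moreover have "mink c c \<noteq> 0" using assms(6) ty by auto
  ultimately have r: "mink x y / mink y y = tx / ty"
    unfolding tx ty by (simp add: power2_eq_square)
  have "(tx / ty) *\<^sub>R y = tx *\<^sub>R c" using \<open>ty \<noteq> 0\<close> unfolding ty by simp
  then show ?thesis unfolding r using tx by simp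
qed

lemma hyp_self: "hyp_pt x \<Longrightarrow> mink x x = -1"
  unfolding hyp_pt_def by simp

lemma edge:
  fixes P Q Y Z C Aj Am :: "real^3" and c \<alpha> :: real
  assumes hP: "hyp_pt P" and hQ: "hyp_pt Q" and hY: "hyp_pt Y" and hZ: "hyp_pt Z"
    and hC: "hyp_pt C" and hAj: "hyp_pt Aj" and hAm: "hyp_pt Am"
    and cj: "mink C Aj = - c" and cm: "mink C Am = - c" and c1: "c > 1"
    and nj1: "mink (C + mink C Aj *\<^sub>R Aj) Y = 0" and nj2: "mink (C + mink C Aj *\<^sub>R Aj) P = 0"
    and nm1: "mink (C + mink C Am *\<^sub>R Am) Q = 0" and nm2: "mink (C + mink C Am *\<^sub>R Am) Z = 0"
    and angP: "hangle Y P Q = pi / 2" and angQ: "hangle P Q Z = pi / 2"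
    and dY: "det3 Y P Q \<noteq> 0" and dZ: "det3 Q Z P \<noteq> 0"
    and ang: "hangle Aj C Am = 2 * \<alpha>" and a0: "0 < \<alpha>" and a1: "\<alpha> < pi / 2"
  shows "cosh (hdist P Q / 2) = c * sin \<alpha>"
proof -
  note mc = mink_comm
  have PP: "mink P P = -1" and QQ: "mink Q Q = -1" and CC: "mink C C = -1"
    and AjAj: "mink Aj Aj = -1" and AmAm: "mink Am Am = -1"
    using hP hQ hC hAj hAm by (simp_all add: hyp_self)
  define \<beta> where "\<beta> = mink P Q"
  have QP: "mink Q P = \<beta>" unfolding \<beta>_def by (simp add: mc)
  have ble: "\<beta> \<le> -1" unfolding \<beta>_def by (rule rev_CS[OF hP hQ])
  have PnQ: "P \<noteq> Q"
  proof
    assume "P = Q" then have "det3 Y P Q = 0" unfolding det3_def by (simp add: algebra_simps)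
    then show False using dY by simp
  qed
  define y1 where "y1 = Q + mink Q P *\<^sub>R P"
  define y2 where "y2 = P + mink P Q *\<^sub>R Q"
  have y1P: "mink y1 P = 0" unfolding y1_def using PP by simp
  have y2Q: "mink y2 Q = 0" unfolding y2_def using QQ by simp
  have y1y1: "mink y1 y1 = \<beta> * \<beta> - 1" unfolding y1_def using PP QQ QP
    by (simp add: mc[of P Q] algebra_simps)
  have y2y2: "mink y2 y2 = \<beta> * \<beta> - 1" unfolding y2_def using PP QQ QP
    by (simp add: mc[of Q P] \<beta>_def algebra_simps)
  have y1y2: "mink y1 y2 = \<beta> * (\<beta> * \<beta> - 1)" unfolding y1_def y2_def using PP QQ QP
    by (simp add: \<beta>_def algebra_simps)
  have bne: "\<beta> \<noteq> -1"
  proof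
    assume b: "\<beta> = -1"
    then have "mink y1 y1 = 0" using y1y1 by simp
    then have "y1 = 0" using tangent_nonneg(2)[OF hP y1P] by simp
    then have "Q = P" unfolding y1_def QP b by (simp add: algebra_simps)
    then show False using PnQ by simp
  qed
  have yne: "\<beta> * \<beta> - 1 \<noteq> 0"
  proof
    assume "\<beta> * \<beta> - 1 = 0"
    then have "(\<beta> - 1) * (\<beta> + 1) = 0" by (simp add: algebra_simps)
    then show False using ble bne by auto
  qed
  have y1Y: "mink y1 Y = 0"
  proof -
    have "mink (Y + mink Y P *\<^sub>R P) y1 = 0" using right_angle[OF hP angP] unfolding y1_def .
    then show ?thesis using y1P by (simp add: mc)
  qed
  have y2Z: "mink y2 Z = 0"
  proof -
    have "mink y2 (Z + mink Z Q *\<^sub>R Q) = 0" using right_angle[OF hQ angQ] unfolding y2_def .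
    then show ?thesis using y2Q by (simp add: mc)
  qed
  define uj where "uj = C + mink C Aj *\<^sub>R Aj"
  define um where "um = C + mink C Am *\<^sub>R Am"
  have "uj = (mink uj y1 / mink y1 y1) *\<^sub>R y1"
    by (rule par[of uj Y P y1 Q]) (use nj1 nj2 y1Y y1P dY y1y1 yne in \<open>simp_all add: uj_def mc\<close>)
  then obtain lm where lam: "uj = lm *\<^sub>R y1" by blast
  have "um = (mink um y2 / mink y2 y2) *\<^sub>R y2"
    by (rule par[of um Q Z y2 P]) (use nm1 nm2 y2Q y2Z dZ y2y2 yne in \<open>simp_all add: um_def mc\<close>)
  then obtain \<mu> where mu: "um = \<mu> *\<^sub>R y2" by blast
  have ujuj: "mink uj uj = c * c - 1" unfolding uj_def using cj CC AjAj
    by (simp add: mc[of Aj C] algebra_simps)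
  have umum: "mink um um = c * c - 1" unfolding um_def using cm CC AmAm
    by (simp add: mc[of Am C] algebra_simps)
  have l2: "c * c - 1 = lm * lm * (\<beta> * \<beta> - 1)" using ujuj y1y1 unfolding lam by simp
  have m2: "c * c - 1 = \<mu> * \<mu> * (\<beta> * \<beta> - 1)" using umum y2y2 unfolding mu by simp
  have ujum: "mink uj um = lm * \<mu> * (\<beta> * (\<beta> * \<beta> - 1))" using y1y2 unfolding lam mu by simp
  have "1 * c < c * c" using c1 by (intro mult_strict_right_mono) auto
  then have cpos: "c * c - 1 > 0" using c1 by linarith
  define K where "K = mink Aj Am"
  have cosa: "cos (2 * \<alpha>) = (K + c * c) / (c * c - 1)"
  proof -
    have e: "cos (hangle Aj C Am) = mink (Aj + mink Aj C *\<^sub>R C) (Am + mink Am C *\<^sub>R C) /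
      sqrt (mink (Aj + mink Aj C *\<^sub>R C) (Aj + mink Aj C *\<^sub>R C) *
            mink (Am + mink Am C *\<^sub>R C) (Am + mink Am C *\<^sub>R C))"
      by (rule cos_hangle[OF hC])
    have AjC: "mink Aj C = - c" and AmC: "mink Am C = - c" using cj cm by (simp_all add: mc)
    have "mink (Aj + mink Aj C *\<^sub>R C) (Am + mink Am C *\<^sub>R C) = K + c * c"
      unfolding K_def AjC AmC using cj cm CC AjC AmC by (simp add: algebra_simps)
    moreover have "mink (Aj + mink Aj C *\<^sub>R C) (Aj + mink Aj C *\<^sub>R C) = c * c - 1"
      unfolding AjC using cj CC AjAj by (simp add: mc[of Aj C] algebra_simps)
    moreover have "mink (Am + mink Am C *\<^sub>R C) (Am + mink Am C *\<^sub>R C) = c * c - 1"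
      unfolding AmC using cm CC AmAm by (simp add: mc[of Am C] algebra_simps)
    moreover have "sqrt ((c * c - 1) * (c * c - 1)) = c * c - 1" using cpos by simp
    ultimately show ?thesis using e ang by simp
  qed
  have ujum2: "mink uj um = - 1 + 2 * c * c + c * c * K"
    unfolding uj_def um_def K_def using cj cm CC by (simp add: mc[of Aj C] mc[of Am C] algebra_simps)
  define k where "k = 1 - 2 * c * c * (sin \<alpha>)^2"
  have Kv: "K = (c * c - 1) * cos (2 * \<alpha>) - c * c" using cosa cpos by (simp add: field_simps)
  have ujum3: "mink uj um = (c * c - 1) * k"
    unfolding ujum2 Kv k_def cos_double_sin by (simp add: algebra_simps)
  have "((c * c - 1) * k)^2 = (c * c - 1)^2 * (\<beta> * \<beta>)"
  proof -
    have "((c * c - 1) * k)^2 = (lm * \<mu> * (\<beta> * (\<beta> * \<beta> - 1)))^2" using ujum ujum3 by simp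
    also have "\<dots> = (lm * lm * (\<beta> * \<beta> - 1)) * (\<mu> * \<mu> * (\<beta> * \<beta> - 1)) * (\<beta> * \<beta>)"
      by (simp add: power2_eq_square algebra_simps)
    also have "\<dots> = (c * c - 1)^2 * (\<beta> * \<beta>)" by (simp only: l2[symmetric] m2[symmetric] power2_eq_square)
    finally show ?thesis .
  qed
  then have kb: "k * k = \<beta> * \<beta>" using cpos by (simp add: power2_eq_square)
  have sa: "sin \<alpha> > 0" using a0 a1 by (intro sin_gt_zero) simp_all
  have kneg: "k = \<beta>"
  proof -
    have "(k - \<beta>) * (k + \<beta>) = 0" using kb by (simp add: algebra_simps)
    moreover have "k + \<beta> \<noteq> 0"
    proof
      assume "k + \<beta> = 0"
      then have "k \<ge> 1" using ble by simp
      moreover have "c * c * (sin \<alpha>)^2 > 0" using c1 sa by simp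
      ultimately show False unfolding k_def by simp
    qed
    ultimately show ?thesis by simp
  qed
  have ch: "cosh (hdist P Q) = - \<beta>" using cosh_hdist(1)[OF hP hQ] unfolding \<beta>_def .
  have "cosh (hdist P Q) = 2 * (cosh (hdist P Q / 2))^2 - 1"
    using cosh_double_cosh[of "hdist P Q / 2"] by simp
  then have "(cosh (hdist P Q / 2))^2 = (c * sin \<alpha>)^2"
    using ch kneg unfolding k_def by (simp add: power2_eq_square algebra_simps)
  moreover have "c * sin \<alpha> \<ge> 0" using c1 sa by simp
  ultimately show ?thesis by (simp add: power2_eq_iff_nonneg)
qed


lemma hline_mem1: "hyp_pt p \<Longrightarrow> p \<in> hline p q"
  unfolding hline_def by (simp add: span_base)
lemma hline_mem2: "hyp_pt q \<Longrightarrow> q \<in> hline p q"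
  unfolding hline_def by (simp add: span_base)

lemma perp:
  assumes "perp_foot C (hline p q) A" "X \<in> hline p q"
  shows "mink (C + mink C A *\<^sub>R A) X = 0" and "hyp_pt A"
proof -
  have Am: "A \<in> hline p q" and pf: "\<forall>X\<in>hline p q. X \<noteq> A \<longrightarrow> hangle C A X = pi / 2"
    using assms(1) unfolding perp_foot_def by auto
  show hA: "hyp_pt A" using Am unfolding hline_def by simp
  have t: "mink (C + mink C A *\<^sub>R A) A = 0" using hyp_self[OF hA] by simp
  show "mink (C + mink C A *\<^sub>R A) X = 0"
  proof (cases "X = A")
    case True then show ?thesis using t by simp
  next
    case False
    then have "hangle C A X = pi / 2" using pf assms(2) by blast
    from right_angle[OF hA this]
    have "mink (C + mink C A *\<^sub>R A) X + mink X A * mink (C + mink C A *\<^sub>R A) A = 0"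
      by simp
    then show ?thesis using t by simp
  qed
qed

lemma vxs: "vx v 0 = v 0" "vx v 1 = v 1" "vx v 2 = v 2" "vx v 3 = v 3" "vx v 4 = v 4"
  "vx v 5 = v 5" "vx v 6 = v 0" "vx v 7 = v 1" "vx v 8 = v 2" "vx v 9 = v 3" "vx v 10 = v 4"
  "vx v 11 = v 5"
  unfolding vx_def by simp_all

lemma conv_det:
  assumes "right_angled_hexagon v" "k < 6" "j < 6" "j \<noteq> k" "j \<noteq> (k+1) mod 6"
  shows "det3 (vx v k) (vx v (k+1)) (vx v j) \<noteq> 0"
proof -
  have "det3 (vx v k) (vx v (k+1)) (vx v j) * det3 (vx v k) (vx v (k+1)) (vx v j) > 0"
    using assms unfolding right_angled_hexagon_def by blast
  then show ?thesis by auto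
qed

lemma per_hex:
  fixes \<alpha> :: "nat \<Rightarrow> real"
  assumes al: "\<forall>i\<in>{1,2,3}. 0 < \<alpha> i \<and> \<alpha> i < pi / 2"
    and sum: "\<alpha> 1 + \<alpha> 2 + \<alpha> 3 = pi"
    and H: "hex_tripod v C A d \<alpha>"
  shows "cosh (long_len v 1 / 2) = cosh d * sin (\<alpha> 1)"
    "cosh (long_len v 2 / 2) = cosh d * sin (\<alpha> 2)"
    "cosh (long_len v 3 / 2) = cosh d * sin (\<alpha> 3)"
proof -
  have RA: "right_angled_hexagon v" and HI: "hex_interior v C"
    and PF: "\<forall>i\<in>{1,2,3}. perp_foot C (short_line v i) (A i) \<and> hdist C (A i) = d"
    and AN: "\<forall>i j m. {i, j, m} = {1, 2, 3::nat} \<longrightarrow> hangle (A j) C (A m) = 2 * \<alpha> i"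
    using H unfolding hex_tripod_def by auto
  have hv: "\<And>k. k < 6 \<Longrightarrow> hyp_pt (v k)" using RA unfolding right_angled_hexagon_def by blast
  have hv0: "hyp_pt (v 0)" and hv1: "hyp_pt (v 1)" and hv2: "hyp_pt (v 2)" and hv3: "hyp_pt (v 3)"
    and hv4: "hyp_pt (v 4)" and hv5: "hyp_pt (v 5)" by (simp_all add: hv)
  have hC: "hyp_pt C" using HI unfolding hex_interior_def by simp
  have rt: "\<And>k. k < 6 \<Longrightarrow> hangle (vx v (k+5)) (vx v k) (vx v (k+1)) = pi / 2"
    using RA unfolding right_angled_hexagon_def by blast
  have "hangle (vx v 5) (vx v 0) (vx v 1) = pi / 2" using rt[of 0] by (simp add: eval_nat_numeral)
  then have r0: "hangle (v 5) (v 0) (v 1) = pi / 2" unfolding vxs .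
  have "hangle (vx v 6) (vx v 1) (vx v 2) = pi / 2" using rt[of 1] by (simp add: eval_nat_numeral)
  then have r1: "hangle (v 0) (v 1) (v 2) = pi / 2" unfolding vxs .
  have "hangle (vx v 7) (vx v 2) (vx v 3) = pi / 2" using rt[of 2] by (simp add: eval_nat_numeral)
  then have r2: "hangle (v 1) (v 2) (v 3) = pi / 2" unfolding vxs .
  have "hangle (vx v 8) (vx v 3) (vx v 4) = pi / 2" using rt[of 3] by (simp add: eval_nat_numeral)
  then have r3: "hangle (v 2) (v 3) (v 4) = pi / 2" unfolding vxs .
  have "hangle (vx v 9) (vx v 4) (vx v 5) = pi / 2" using rt[of 4] by (simp add: eval_nat_numeral)
  then have r4: "hangle (v 3) (v 4) (v 5) = pi / 2" unfolding vxs .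
  have "hangle (vx v 10) (vx v 5) (vx v 6) = pi / 2" using rt[of 5] by (simp add: eval_nat_numeral)
  then have r5: "hangle (v 4) (v 5) (v 0) = pi / 2" unfolding vxs .
  have "det3 (vx v 5) (vx v 6) (vx v 1) \<noteq> 0" using conv_det[OF RA, of 5 1] by simp
  then have d501: "det3 (v 5) (v 0) (v 1) \<noteq> 0" unfolding vxs .
  have "det3 (vx v 1) (vx v (1+1)) (vx v 0) \<noteq> 0" by (rule conv_det[OF RA]) simp_all
  then have d120: "det3 (v 1) (v 2) (v 0) \<noteq> 0" unfolding one_add_one vxs .
  have "det3 (vx v 1) (vx v (1+1)) (vx v 3) \<noteq> 0" by (rule conv_det[OF RA]) simp_all
  then have d123: "det3 (v 1) (v 2) (v 3) \<noteq> 0" unfolding one_add_one vxs .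
  have "det3 (vx v 3) (vx v 4) (vx v 2) \<noteq> 0" using conv_det[OF RA, of 3 2] by simp
  then have d342: "det3 (v 3) (v 4) (v 2) \<noteq> 0" unfolding vxs .
  have "det3 (vx v 3) (vx v 4) (vx v 5) \<noteq> 0" using conv_det[OF RA, of 3 5] by simp
  then have d345: "det3 (v 3) (v 4) (v 5) \<noteq> 0" unfolding vxs .
  have "det3 (vx v 5) (vx v 6) (vx v 4) \<noteq> 0" using conv_det[OF RA, of 5 4] by simp
  then have d504: "det3 (v 5) (v 0) (v 4) \<noteq> 0" unfolding vxs .
  have sl1: "short_line v 1 = hline (v 3) (v 4)" unfolding short_line_def vx_def by simp
  have sl2: "short_line v 2 = hline (v 5) (v 0)" unfolding short_line_def vx_def by simp
  have sl3: "short_line v 3 = hline (v 1) (v 2)" unfolding short_line_def vx_def by simp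
  have pf1: "perp_foot C (hline (v 3) (v 4)) (A 1)" and hd1: "hdist C (A 1) = d"
    using PF sl1 by auto
  have pf2: "perp_foot C (hline (v 5) (v 0)) (A 2)" and hd2: "hdist C (A 2) = d"
    using PF sl2 by auto
  have pf3: "perp_foot C (hline (v 1) (v 2)) (A 3)" and hd3: "hdist C (A 3) = d"
    using PF sl3 by auto
  have hA1: "hyp_pt (A 1)" using perp(2)[OF pf1 hline_mem1[OF hv3]] .
  have hA2: "hyp_pt (A 2)" using perp(2)[OF pf2 hline_mem1[OF hv5]] .
  have hA3: "hyp_pt (A 3)" using perp(2)[OF pf3 hline_mem1[OF hv1]] .
  note n13 = perp(1)[OF pf1 hline_mem1[OF hv3]] and n14 = perp(1)[OF pf1 hline_mem2[OF hv4]]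
  note n25 = perp(1)[OF pf2 hline_mem1[OF hv5]] and n20 = perp(1)[OF pf2 hline_mem2[OF hv0]]
  note n31 = perp(1)[OF pf3 hline_mem1[OF hv1]] and n32 = perp(1)[OF pf3 hline_mem2[OF hv2]]
  have c1: "mink C (A 1) = - cosh d" using cosh_hdist(1)[OF hC hA1] hd1 by simp
  have c2: "mink C (A 2) = - cosh d" using cosh_hdist(1)[OF hC hA2] hd2 by simp
  have c3: "mink C (A 3) = - cosh d" using cosh_hdist(1)[OF hC hA3] hd3 by simp
  have a123: "hangle (A 2) C (A 3) = 2 * \<alpha> 1" using AN[rule_format, of 1 2 3] by auto
  have a231: "hangle (A 3) C (A 1) = 2 * \<alpha> 2" using AN[rule_format, of 2 3 1] by auto
  have a312: "hangle (A 1) C (A 2) = 2 * \<alpha> 3" using AN[rule_format, of 3 1 2] by auto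
  have dge: "d \<ge> 0" using cosh_hdist(2)[OF hC hA1] hd1 by simp
  have "d \<noteq> 0"
  proof
    assume "d = 0"
    have z: "hangle (A j) C (A m) = pi / 2" if "hyp_pt (A j)" "mink C (A j) = - cosh d" for j m
    proof -
      have "mink (A j + mink (A j) C *\<^sub>R C) (A j + mink (A j) C *\<^sub>R C) = 0"
        using that \<open>d = 0\<close> hyp_self[OF hC] hyp_self[OF that(1)]
        by (simp add: mink_comm[of C "A j"] algebra_simps)
      then show ?thesis unfolding hangle_def Let_def by simp
    qed
    have "2 * \<alpha> 1 = pi / 2" using z[OF hA2 c2, of 3] a123 by simp
    moreover have "2 * \<alpha> 2 = pi / 2" using z[OF hA3 c3, of 1] a231 by simp
    moreover have "2 * \<alpha> 3 = pi / 2" using z[OF hA1 c1, of 2] a312 by simp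
    ultimately show False using sum pi_gt_zero by linarith
  qed
  then have "cosh 0 < cosh d" using dge by (subst cosh_real_nonneg_less_iff) auto
  then have cg: "cosh d > 1" by simp
  have al1: "0 < \<alpha> 1" "\<alpha> 1 < pi / 2" and al2: "0 < \<alpha> 2" "\<alpha> 2 < pi / 2"
    and al3: "0 < \<alpha> 3" "\<alpha> 3 < pi / 2" using al by auto
  have "cosh (hdist (v 0) (v 1) / 2) = cosh d * sin (\<alpha> 1)"
    by (rule edge[OF hv0 hv1 hv5 hv2 hC hA2 hA3 c2 c3 cg n25 n20 n31 n32 r0 r1 d501 d120 a123 al1])
  then show "cosh (long_len v 1 / 2) = cosh d * sin (\<alpha> 1)"
    unfolding long_len_def vx_def by simp
  have "cosh (hdist (v 2) (v 3) / 2) = cosh d * sin (\<alpha> 2)"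
    by (rule edge[OF hv2 hv3 hv1 hv4 hC hA3 hA1 c3 c1 cg n31 n32 n13 n14 r2 r3 d123 d342 a231 al2])
  then show "cosh (long_len v 2 / 2) = cosh d * sin (\<alpha> 2)"
    unfolding long_len_def vx_def by simp
  have "cosh (hdist (v 4) (v 5) / 2) = cosh d * sin (\<alpha> 3)"
    by (rule edge[OF hv4 hv5 hv3 hv0 hC hA1 hA2 c1 c2 cg n13 n14 n25 n20 r4 r5 d345 d504 a312 al3])
  then show "cosh (long_len v 3 / 2) = cosh d * sin (\<alpha> 3)"
    unfolding long_len_def vx_def by simp
qed

theorem mainTheorem3:
  fixes \<alpha> :: "nat \<Rightarrow> real"
    and v v' :: "nat \<Rightarrow> real^3" and C C' :: "real^3" and A A' :: "nat \<Rightarrow> real^3"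
    and d d' :: real
  assumes "\<forall>i\<in>{1,2,3}. 0 < \<alpha> i \<and> \<alpha> i < pi / 2"
    and "\<alpha> 1 + \<alpha> 2 + \<alpha> 3 = pi"
    and "hex_tripod v C A d \<alpha>"
    and "hex_tripod v' C' A' d' \<alpha>"
  shows "\<forall>i\<in>{1,2,3}. \<forall>j\<in>{1,2,3}.
           cosh (long_len v' i / 2) / cosh (long_len v' j / 2)
             = cosh (long_len v i / 2) / cosh (long_len v j / 2)"
proof -
  have L: "\<forall>i\<in>{1,2,3}. cosh (long_len v i / 2) = cosh d * sin (\<alpha> i)"
    using per_hex[OF assms(1,2,3)] by auto
  have L': "\<forall>i\<in>{1,2,3}. cosh (long_len v' i / 2) = cosh d' * sin (\<alpha> i)"
    using per_hex[OF assms(1,2,4)] by auto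
  have cd: "cosh d \<noteq> 0" "cosh d' \<noteq> 0" by (simp_all add: less_imp_neq[symmetric])
  show ?thesis
  proof (intro ballI)
    fix i j :: nat assume i: "i \<in> {1,2,3}" and j: "j \<in> {1,2,3}"
    show "cosh (long_len v' i / 2) / cosh (long_len v' j / 2)
             = cosh (long_len v i / 2) / cosh (long_len v j / 2)"
      using L[rule_format, OF i] L[rule_format, OF j] L'[rule_format, OF i] L'[rule_format, OF j] cd
      by simp
  qed
qed

end
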